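(* For any $\alpha>0$ there exists $\beta>0$ such that the following holds. Let $\Lambda_1,\dots,\Lambda_m\subseteq\mathbb{R}^d$ be hyperplanes with $b\in\bigcap_{i\in[m]}\Lambda_i$, and let $j$ be the lowest dimension for which the set $V=\{v_1,\dots,v_m\}$ of their unit normal vectors is $(j,\beta^j)$-flat with respect to a $j$-plane $\Lambda_B$ with $b\in\Lambda_B$. Let $S\subseteq\mathbb{R}^d$ and $p\in S$. If $S$ is $(p,d-1,\beta^d)$-flat with respect to $\Lambda_i$ for every $i\in[m]$, then $S$ is $(p,d-j,\alpha)$-flat with respect to $\Lambda:=\Lambda_B(b)^{\perp}$.
   Context: A $j$-plane is an affine subspace of dimension $j$. The angle between a vector $v$ and a plane $\Lambda$ is the infimum of the angles between $v$ and vectors $w\in\Lambda-\Lambda$. A set of vectors $V$ is $(j,\alpha)$-flat with respect to a $j$-plane $\Lambda$ if every $v\in V$ makes angle at most $\alpha$ with $\Lambda$. A set $S$ is $(p,j,\alpha)$-flat with respect to a $j$-plane $\Lambda$ (for $p\in S$) if $\{p-q:q\in S\}$ is $(j,\alpha)$-flat with respect to $\Lambda$. For a $j$-plane $\gamma\subseteq\mathbb{R}^d$ and $p\in\gamma$, $\gamma(p)^{\perp}$ is the $(d-j)$-plane through $p$ orthogonal to $\gamma$. *)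

theory Defs
  imports "HOL-Analysis.Analysis"
begin

definition vec_angle :: "'a::euclidean_space \<Rightarrow> 'a \<Rightarrow> real" where
  "vec_angle v w = arccos ((v \<bullet> w) / (norm v * norm w))"

definition is_plane :: "nat \<Rightarrow> 'a::euclidean_space set \<Rightarrow> bool" where
  "is_plane j L \<longleftrightarrow> affine L \<and> L \<noteq> {} \<and> aff_dim L = int j"

text \<open>Conventions: the zero vector makes angle 0 with every plane;
  if L - L = {0} (a 0-plane) a nonzero vector makes angle pi/2 with it.\<close>
definition plane_angle :: "'a::euclidean_space \<Rightarrow> 'a set \<Rightarrow> real" where
  "plane_angle v L =
     (if v = 0 then 0
      else if {w. \<exists>x\<in>L. \<exists>y\<in>L. w = x - y \<and> w \<noteq> 0} = {} then pi / 2
      else Inf (vec_angle v ` {w. \<exists>x\<in>L. \<exists>y\<in>L. w = x - y \<and> w \<noteq> 0}))"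

definition flat_vecs :: "nat \<Rightarrow> real \<Rightarrow> 'a::euclidean_space set \<Rightarrow> 'a set \<Rightarrow> bool" where
  "flat_vecs j \<alpha> V L \<longleftrightarrow> is_plane j L \<and> (\<forall>v\<in>V. plane_angle v L \<le> \<alpha>)"

definition flat_set :: "'a::euclidean_space \<Rightarrow> nat \<Rightarrow> real \<Rightarrow> 'a set \<Rightarrow> 'a set \<Rightarrow> bool" where
  "flat_set p j \<alpha> S L \<longleftrightarrow> p \<in> S \<and> flat_vecs j \<alpha> {p - q | q. q \<in> S} L"

definition perp_plane :: "'a::euclidean_space set \<Rightarrow> 'a \<Rightarrow> 'a set" where
  "perp_plane \<gamma> p = {x. \<forall>y\<in>\<gamma>. \<forall>z\<in>\<gamma>. (x - p) \<bullet> (y - z) = 0}"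

end

theory Submission
  imports Defs
begin

lemma cos_le_quad:
  fixes x :: real assumes "0 < x" "x \<le> 1"
  shows "cos x \<le> 1 - x^2/4"
proof -
  obtain t where t: "0 < t" "t < x" "cos x = (\<Sum>m<2. cos_coeff m * x ^ m) + (cos (t + 1/2 * real 2 * pi) / fact 2) * x ^ 2"
    using Maclaurin_cos_expansion2[of x 2] assms by auto
  have "cos x = 1 - cos t * x^2 / 2" using t(3) by (simp add: cos_coeff_def numeral_2_eq_2)
  moreover have "cos t \<ge> 1/2"
  proof -
    have "pi / 3 > 1" using pi_gt3 by simp
    hence "cos (pi/3) \<le> cos t" using t assms by (intro cos_monotone_0_pi_le) auto
    thus ?thesis by (simp add: cos_60)
  qed
  moreover have "1/2 * x^2 \<le> cos t * x^2"
    by (rule mult_right_mono) (use \<open>cos t \<ge> 1/2\<close> in auto)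
  ultimately show ?thesis by linarith
qed

lemma vec_angle_nonneg: "0 \<le> vec_angle (u::'a::euclidean_space) w"
proof -
  have "\<bar>u \<bullet> w\<bar> \<le> norm u * norm w" by (rule Cauchy_Schwarz_ineq2)
  hence "\<bar>(u \<bullet> w) / (norm u * norm w)\<bar> \<le> 1"
  proof (cases "norm u * norm w = 0")
    case True thus ?thesis by auto
  next
    case False
    hence "0 < norm u * norm w" by (metis mult_nonneg_nonneg norm_ge_zero order_le_less)
    hence "\<bar>u \<bullet> w\<bar> / (norm u * norm w) \<le> 1"
      using \<open>\<bar>u \<bullet> w\<bar> \<le> norm u * norm w\<close> by (simp add: pos_divide_le_eq)
    thus ?thesis using \<open>0 < norm u * norm w\<close> by (metis abs_divide abs_of_pos)
  qed
  thus ?thesis unfolding vec_angle_def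
    by (metis abs_le_iff arccos_lbound minus_le_iff)
qed

lemma pa_upper:
  fixes u :: "'a::euclidean_space"
  assumes "x\<in>L" "y\<in>L" "x - y \<noteq> 0"
  shows "plane_angle u L \<le> vec_angle u (x - y)"
proof (cases "u = 0")
  case True thus ?thesis by (simp add: plane_angle_def vec_angle_nonneg)
next
  case False
  let ?D = "{w. \<exists>x\<in>L. \<exists>y\<in>L. w = x - y \<and> w \<noteq> 0}"
  have mem: "x - y \<in> ?D" using assms by auto
  hence ne: "?D \<noteq> {}" by (metis empty_iff)
  have bdd: "bdd_below (vec_angle u ` ?D)"
    by (intro bdd_belowI[of _ 0]) (auto simp: vec_angle_nonneg)
  have "Inf (vec_angle u ` ?D) \<le> vec_angle u (x - y)"
    by (rule cInf_lower[OF imageI[OF mem] bdd])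
  moreover have "plane_angle u L = Inf (vec_angle u ` ?D)"
    unfolding plane_angle_def using False ne by (simp only: if_False simp_thms)
  ultimately show ?thesis by simp
qed

lemma pa_lower:
  fixes u :: "'a::euclidean_space"
  assumes "u \<noteq> 0" "plane_angle u L \<le> e" "e < pi/2"
    "\<And>w. w \<in> {w. \<exists>x\<in>L. \<exists>y\<in>L. w = x - y \<and> w \<noteq> 0} \<Longrightarrow> A \<le> vec_angle u w"
  shows "A \<le> e"
proof -
  let ?D = "{w. \<exists>x\<in>L. \<exists>y\<in>L. w = x - y \<and> w \<noteq> 0}"
  show ?thesis
  proof (cases "?D = {}")
    case True thus ?thesis using assms by (simp add: plane_angle_def)
  next
    case False
    have "A \<le> Inf (vec_angle u ` ?D)"
      by (rule cInf_greatest) (use False assms(4) in auto)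
    moreover have "plane_angle u L = Inf (vec_angle u ` ?D)"
      unfolding plane_angle_def using False assms(1) by (simp only: if_False simp_thms)
    ultimately show ?thesis using assms by simp
  qed
qed

lemma arccos_le_imp:
  assumes "arccos x \<le> e" "0 \<le> e" "e \<le> pi" "-1 \<le> x" "x \<le> 1"
  shows "cos e \<le> x"
proof -
  have "cos e \<le> cos (arccos x)"
    using assms arccos_bounded[of x] by (subst cos_mono_le_eq) auto
  thus ?thesis using assms by simp
qed

lemma sin_sq_le: "(sin e)^2 \<le> (e::real)^2"
  by (metis abs_sin_x_le_abs_x power2_abs abs_ge_zero power_mono)

lemma hyper_bound:
  fixes u v :: "'a::euclidean_space"
  assumes nu: "norm u = 1" and nv: "norm v = 1" and orth: "\<forall>x\<in>H. \<forall>y\<in>H. v \<bullet> (x - y) = 0"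
    and pa: "plane_angle u H \<le> e" and e0: "0 \<le> e" and e1: "e < pi/2"
  shows "\<bar>u \<bullet> v\<bar> \<le> e"
proof -
  define c where "c = u \<bullet> v"
  have c1: "\<bar>c\<bar> \<le> 1" using Cauchy_Schwarz_ineq2[of u v] nu nv by (simp add: c_def)
  define u' where "u' = u - c *\<^sub>R v"
  have uu: "u \<bullet> u = 1" "v \<bullet> v = 1" using nu nv by (simp_all add: dot_square_norm)
  have "u' \<bullet> u' = u \<bullet> u - 2 * c * (u \<bullet> v) + c * c * (v \<bullet> v)"
    unfolding u'_def by (simp add: inner_diff_left inner_diff_right inner_commute algebra_simps)
  hence "u' \<bullet> u' = 1 - c^2" using uu by (simp add: c_def power2_eq_square)
  hence nu': "norm u' = sqrt (1 - c^2)" by (simp add: norm_eq_sqrt_inner)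
  have s01: "0 \<le> sqrt (1 - c^2)" "sqrt (1 - c^2) \<le> 1"
    using c1 abs_square_le_1 by auto
  have "arccos (sqrt (1 - c^2)) \<le> e"
  proof (rule pa_lower[OF _ pa e1])
    show "u \<noteq> 0" using nu by auto
    fix w assume "w \<in> {w. \<exists>x\<in>H. \<exists>y\<in>H. w = x - y \<and> w \<noteq> 0}"
    then obtain x y where xy: "x \<in> H" "y \<in> H" "w = x - y" "w \<noteq> 0" by auto
    have vw: "v \<bullet> w = 0" using orth xy by auto
    have "u \<bullet> w = u' \<bullet> w" unfolding u'_def using vw by (simp add: inner_diff_left)
    also have "\<dots> \<le> norm u' * norm w" by (rule norm_cauchy_schwarz)
    finally have le: "u \<bullet> w / (norm u * norm w) \<le> sqrt (1 - c^2)"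
      using nu nu' xy(4) by (simp add: divide_le_eq mult.commute)
    have "\<bar>u \<bullet> w\<bar> \<le> norm u * norm w" by (rule Cauchy_Schwarz_ineq2)
    hence ge: "-1 \<le> u \<bullet> w / (norm u * norm w)"
      using nu xy(4) by (simp add: le_divide_eq abs_le_iff)
    show "arccos (sqrt (1 - c^2)) \<le> vec_angle u w"
      unfolding vec_angle_def by (rule arccos_le_arccos[OF ge le s01(2)])
  qed
  hence "cos e \<le> sqrt (1 - c^2)"
  proof (rule arccos_le_imp)
    show "-1 \<le> sqrt (1 - c^2)" using s01(1) by linarith
  qed (use e0 e1 s01 in auto)
  moreover have "0 \<le> cos e" using e0 e1 by (intro cos_ge_zero) auto
  ultimately have "(cos e)^2 \<le> 1 - c^2"
    by (metis power_mono real_sqrt_pow2 abs_square_le_1 c1 diff_ge_0_iff_ge)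
  hence "c^2 \<le> (sin e)^2" using sin_cos_squared_add[of e] by linarith
  hence "c^2 \<le> e^2" using sin_sq_le[of e] by linarith
  thus ?thesis using e0 c_def by (metis power2_abs power2_le_imp_le)
qed

lemma near_sub:
  fixes v P r :: "'a::euclidean_space"
  assumes nv: "norm v = 1" and vPr: "v = P + r" and PU: "P \<in> U" and rU: "\<forall>x\<in>U. r \<bullet> x = 0"
    and pa: "plane_angle v L \<le> s" and s0: "0 \<le> s" and s1: "s < pi/2"
    and DU: "\<And>w. w \<in> {w. \<exists>x\<in>L. \<exists>y\<in>L. w = x - y \<and> w \<noteq> 0} \<Longrightarrow> w \<in> U"
  shows "norm r \<le> s"
proof -
  have Pr: "P \<bullet> r = 0" using rU PU by (simp add: inner_commute)
  have pyth: "(norm P)^2 + (norm r)^2 = 1"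
  proof -
    have "v \<bullet> v = P \<bullet> P + 2 * (P \<bullet> r) + r \<bullet> r"
      unfolding vPr by (simp add: inner_add_left inner_add_right inner_commute)
    thus ?thesis using nv Pr by (simp add: dot_square_norm)
  qed
  have P1: "norm P \<le> 1" using pyth
    by (metis abs_norm_cancel abs_square_le_1 le_add_same_cancel1 zero_le_power2)
  have "arccos (norm P) \<le> s"
  proof (rule pa_lower[OF _ pa s1])
    show "v \<noteq> 0" using nv by auto
    fix w assume wD: "w \<in> {w. \<exists>x\<in>L. \<exists>y\<in>L. w = x - y \<and> w \<noteq> 0}"
    hence wU: "w \<in> U" and w0: "w \<noteq> 0" using DU by auto
    have "v \<bullet> w = P \<bullet> w" using rU wU unfolding vPr by (simp add: inner_add_left)
    also have "\<dots> \<le> norm P * norm w" by (rule norm_cauchy_schwarz)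
    finally have le: "v \<bullet> w / (norm v * norm w) \<le> norm P"
      using nv w0 by (simp add: divide_le_eq)
    have "\<bar>v \<bullet> w\<bar> \<le> norm v * norm w" by (rule Cauchy_Schwarz_ineq2)
    hence ge: "-1 \<le> v \<bullet> w / (norm v * norm w)"
      using nv w0 by (simp add: le_divide_eq abs_le_iff)
    show "arccos (norm P) \<le> vec_angle v w"
      unfolding vec_angle_def by (rule arccos_le_arccos[OF ge le P1])
  qed
  hence "cos s \<le> norm P"
  proof (rule arccos_le_imp)
    show "-1 \<le> norm P" using norm_ge_zero[of P] by linarith
  qed (use s0 s1 P1 in auto)
  moreover have "0 \<le> cos s" using s0 s1 by (intro cos_ge_zero) auto
  ultimately have "(cos s)^2 \<le> (norm P)^2" by (rule power_mono)
  hence "(norm r)^2 \<le> (sin s)^2" using sin_cos_squared_add[of s] pyth by linarith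
  hence "(norm r)^2 \<le> s^2" using sin_sq_le[of s] by linarith
  thus ?thesis using s0 by (metis power2_le_imp_le)
qed

lemma key:
  fixes u y z :: "'a::euclidean_space" and v P r :: "nat \<Rightarrow> 'a"
  assumes U: "subspace U"
    and nu: "norm u = 1" and uyz: "u = y + z" and yU: "y \<in> U" and zU: "\<forall>x\<in>U. z \<bullet> x = 0"
    and vi: "\<And>i. i \<in> I \<Longrightarrow> norm (v i) = 1 \<and> v i = P i + r i \<and> P i \<in> U \<and> (\<forall>x\<in>U. r i \<bullet> x = 0)
               \<and> norm (r i) \<le> \<beta> * \<delta> \<and> \<bar>u \<bullet> v i\<bar> \<le> \<beta> * \<delta>"
    and b0: "0 < \<beta>" and b1: "\<beta> \<le> 1/4" and d0: "0 < \<delta>" and d1: "\<delta> \<le> 1"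
    and ty: "8 * \<beta> \<le> norm y"
  shows "\<exists>W. subspace W \<and> dim U = dim W + 1 \<and> (\<forall>i\<in>I. \<exists>w\<in>W. w \<noteq> 0 \<and> vec_angle (v i) w \<le> \<delta>)"
proof -
  define t where "t = norm y"
  have t0: "0 < t" using ty b0 t_def by linarith
  define e where "e = (1/t) *\<^sub>R y"
  have ne: "norm e = 1" using t0 unfolding e_def t_def by simp
  have ee: "e \<bullet> e = 1" using ne by (simp add: dot_square_norm)
  have eU: "e \<in> U" unfolding e_def using U yU by (rule subspace_scale)
  define W where "W = U \<inter> {x. x \<bullet> e = 0}"
  have sW: "subspace W" unfolding W_def using U subspace_hyperplane2 by (rule subspace_inter)
  have spanU: "span (insert e W) = U"
  proof (rule span_subspace)
    show "insert e W \<subseteq> U" using eU W_def by auto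
    show "U \<subseteq> span (insert e W)"
    proof
      fix x assume xU: "x \<in> U"
      have "x - (x \<bullet> e) *\<^sub>R e \<in> W"
        using xU eU U ee unfolding W_def
        by (auto simp: inner_diff_left subspace_diff subspace_scale)
      hence a: "x - (x \<bullet> e) *\<^sub>R e \<in> span (insert e W)" by (meson span_base insertI2)
      have b: "(x \<bullet> e) *\<^sub>R e \<in> span (insert e W)" by (intro span_scale span_base) auto
      have "x = (x - (x \<bullet> e) *\<^sub>R e) + (x \<bullet> e) *\<^sub>R e" by simp
      thus "x \<in> span (insert e W)" using span_add[OF a b] by metis
    qed
  qed (rule U)
  have "span W = W" using sW by simp
  moreover have "e \<notin> W" using ee unfolding W_def by auto
  ultimately have "e \<notin> span W" by metis
  hence dimU: "dim U = dim W + 1" using dim_insert[of e W] spanU dim_span[of "insert e W"] by simp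
  have yz: "y \<bullet> z = 0" using zU yU inner_commute by metis
  have "u \<bullet> u = y \<bullet> y + 2 * (y \<bullet> z) + z \<bullet> z"
    unfolding uyz by (simp add: inner_add_left inner_add_right inner_commute)
  hence "(norm y)^2 + (norm z)^2 = 1" using nu yz by (simp add: dot_square_norm)
  hence z1: "norm z \<le> 1"
    by (metis abs_norm_cancel abs_square_le_1 le_add_same_cancel2 zero_le_power2)
  have main: "\<exists>w\<in>W. w \<noteq> 0 \<and> vec_angle (v i) w \<le> \<delta>" if iI: "i \<in> I" for i
  proof -
    have nv: "norm (v i) = 1" and vPr: "v i = P i + r i" and PU: "P i \<in> U"
      and rU: "\<forall>x\<in>U. r i \<bullet> x = 0" and rb: "norm (r i) \<le> \<beta> * \<delta>"
      and uv: "\<bar>u \<bullet> v i\<bar> \<le> \<beta> * \<delta>" using vi[OF iI] by auto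
    define c where "c = P i \<bullet> e"
    define w where "w = P i - c *\<^sub>R e"
    have wU: "w \<in> U" unfolding w_def using U PU eU by (simp add: subspace_diff subspace_scale)
    have we: "w \<bullet> e = 0" unfolding w_def c_def using ee by (simp add: inner_diff_left)
    have wW: "w \<in> W" using wU we W_def by auto
    have Pr: "P i \<bullet> r i = 0" using rU PU by (simp add: inner_commute)
    have pyth: "(norm (P i))^2 + (norm (r i))^2 = 1"
    proof -
      have "v i \<bullet> v i = P i \<bullet> P i + 2 * (P i \<bullet> r i) + r i \<bullet> r i"
        unfolding vPr by (simp add: inner_add_left inner_add_right inner_commute)
      thus ?thesis using nv Pr by (simp add: dot_square_norm)
    qed
    have Pz: "P i \<bullet> z = 0" using zU PU inner_commute by metis
    have "\<bar>r i \<bullet> z\<bar> \<le> norm (r i) * norm z" by (rule Cauchy_Schwarz_ineq2)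
    also have "\<dots> \<le> \<beta> * \<delta> * 1" using rb z1 b0 d0 by (intro mult_mono) auto
    finally have rz: "\<bar>r i \<bullet> z\<bar> \<le> \<beta> * \<delta>" by simp
    have vy: "v i \<bullet> y = u \<bullet> v i - r i \<bullet> z"
      using Pz unfolding uyz vPr by (simp add: inner_add_left inner_add_right inner_commute)
    have vy2: "\<bar>v i \<bullet> y\<bar> \<le> 2 * \<beta> * \<delta>" using vy uv rz by linarith
    have re: "r i \<bullet> e = 0" using rU eU by auto
    have cvy: "c = (v i \<bullet> y) / t"
      unfolding c_def e_def using re vPr rU yU by (simp add: inner_add_left inner_add_right inner_diff_left)
    have "\<bar>c\<bar> \<le> 2 * \<beta> * \<delta> / t" using vy2 t0 unfolding cvy by (simp add: abs_divide divide_right_mono)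
    also have "\<dots> \<le> 2 * \<beta> * \<delta> / (8 * \<beta>)"
      using ty b0 d0 t_def t0 by (intro divide_left_mono) auto
    also have "\<dots> = \<delta> / 4" using b0 by simp
    finally have cb: "\<bar>c\<bar> \<le> \<delta> / 4" .
    have ww0: "w \<bullet> w = P i \<bullet> P i - 2 * c * (P i \<bullet> e) + c * c * (e \<bullet> e)"
      unfolding w_def by (simp add: inner_diff_left inner_diff_right inner_commute algebra_simps)
    have Pe: "P i \<bullet> e = c" by (simp add: c_def)
    have ww1: "w \<bullet> w = P i \<bullet> P i - c^2" using ww0 ee Pe by (simp add: power2_eq_square)
    have ww: "(norm w)^2 = (norm (P i))^2 - c^2" using ww1 by (simp add: power2_norm_eq_inner)
    have Pw: "P i \<bullet> w = P i \<bullet> P i - c^2"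
      unfolding w_def using Pe by (simp add: inner_diff_right power2_eq_square)
    have vw: "v i \<bullet> w = (norm w)^2"
    proof -
      have "r i \<bullet> w = 0" using rU wU by auto
      hence "v i \<bullet> w = P i \<bullet> w" unfolding vPr by (simp add: inner_add_left)
      thus ?thesis using Pw ww1 by (simp add: power2_norm_eq_inner)
    qed
    have c2: "c^2 \<le> \<delta>^2 / 16"
    proof -
      have "c^2 \<le> (\<delta>/4)^2" using cb by (metis abs_ge_zero power2_abs power_mono)
      thus ?thesis by (simp add: power_divide)
    qed
    have r2: "(norm (r i))^2 \<le> \<delta>^2 / 16"
    proof -
      have "(norm (r i))^2 \<le> (\<beta> * \<delta>)^2" using rb by (intro power_mono) auto
      also have "\<dots> = \<beta>^2 * \<delta>^2" by (simp add: power_mult_distrib)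
      also have "\<dots> \<le> (1/4)^2 * \<delta>^2" using b0 b1 by (intro mult_right_mono power_mono) auto
      finally show ?thesis by (simp add: power_divide)
    qed
    have wlow: "1 - \<delta>^2 / 8 \<le> (norm w)^2" using ww pyth c2 r2 by linarith
    have whigh: "(norm w)^2 \<le> 1" using ww pyth by (smt (verit) zero_le_power2)
    have w1: "norm w \<le> 1" using whigh by (metis abs_norm_cancel abs_square_le_1)
    have "\<delta>^2 \<le> 1" using d0 d1 by (simp add: power_le_one)
    hence wpos: "0 < (norm w)^2" using wlow by linarith
    hence w0: "w \<noteq> 0" by auto
    have nw0: "0 < norm w" using w0 by simp
    have ang: "vec_angle (v i) w = arccos (norm w)"
      unfolding vec_angle_def using vw nv nw0 by (simp add: power2_eq_square)
    have "cos \<delta> \<le> 1 - \<delta>^2 / 4" using cos_le_quad d0 d1 by blast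
    also have "\<dots> \<le> 1 - \<delta>^2 / 8" by simp
    also have "\<dots> \<le> (norm w)^2" by (rule wlow)
    also have "\<dots> \<le> norm w" using w1 nw0 by (simp add: power2_eq_square mult_le_cancel_right1)
    finally have cw: "cos \<delta> \<le> norm w" .
    have "arccos (norm w) \<le> arccos (cos \<delta>)"
      by (rule arccos_le_arccos[OF _ cw w1]) simp
    also have "\<dots> = \<delta>" using d0 d1 pi_gt3 by (intro arccos_cos) auto
    finally show ?thesis using wW w0 ang by auto
  qed
  show ?thesis using sW dimU main by blast
qed

lemma plane_angle_scale:
  fixes x :: "'a::euclidean_space"
  assumes c: "0 < c"
  shows "plane_angle (c *\<^sub>R x) L = plane_angle x L"
proof -
  have va: "vec_angle (c *\<^sub>R x) w = vec_angle x w" for w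
  proof -
    have "(c *\<^sub>R x) \<bullet> w / (norm (c *\<^sub>R x) * norm w) = x \<bullet> w / (norm x * norm w)"
      using c by (simp add: abs_of_pos)
    thus ?thesis unfolding vec_angle_def by simp
  qed
  have "c *\<^sub>R x = 0 \<longleftrightarrow> x = 0" using c by simp
  thus ?thesis unfolding plane_angle_def va by simp
qed

lemma decomp:
  fixes v :: "'a::euclidean_space"
  assumes "subspace U"
  shows "\<exists>P r. P \<in> U \<and> (\<forall>x\<in>U. r \<bullet> x = 0) \<and> v = P + r"
proof -
  obtain y z where "y \<in> span U" "\<And>w. w \<in> span U \<Longrightarrow> orthogonal z w" "v = y + z"
    using orthogonal_subspace_decomp_exists by metis
  moreover have "span U = U" using assms by simp
  ultimately show ?thesis unfolding orthogonal_def by metis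
qed

lemma perp_plane_eq:
  fixes b :: "'a::euclidean_space"
  assumes "b \<in> LB"
  shows "perp_plane LB b = (+) b ` {y. \<forall>x\<in>(\<lambda>x. -b + x) ` LB. orthogonal x y}"
proof
  show "perp_plane LB b \<subseteq> (+) b ` {y. \<forall>x\<in>(\<lambda>x. -b + x) ` LB. orthogonal x y}"
  proof
    fix x assume x: "x \<in> perp_plane LB b"
    have "x - b \<in> {y. \<forall>x\<in>(\<lambda>x. -b + x) ` LB. orthogonal x y}"
    proof (intro CollectI ballI)
      fix y' assume "y' \<in> (\<lambda>x. -b + x) ` LB"
      then obtain y where y: "y \<in> LB" "y' = -b + y" by auto
      hence "(x - b) \<bullet> (y - b) = 0" using x assms unfolding perp_plane_def by blast
      thus "orthogonal y' (x - b)" unfolding orthogonal_def y(2) by (simp add: inner_commute)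
    qed
    moreover have "x = b + (x - b)" by simp
    ultimately show "x \<in> (+) b ` {y. \<forall>x\<in>(\<lambda>x. -b + x) ` LB. orthogonal x y}" by blast
  qed
next
  show "(+) b ` {y. \<forall>x\<in>(\<lambda>x. -b + x) ` LB. orthogonal x y} \<subseteq> perp_plane LB b"
  proof clarify
    fix w assume w: "\<forall>x\<in>(\<lambda>x. -b + x) ` LB. orthogonal x w"
    show "b + w \<in> perp_plane LB b" unfolding perp_plane_def
    proof (clarify)
      fix y z assume "y \<in> LB" "z \<in> LB"
      hence "(-b + y) \<bullet> w = 0" "(-b + z) \<bullet> w = 0" using w unfolding orthogonal_def by auto
      hence "w \<bullet> ((-b + y) - (-b + z)) = 0" by (simp add: inner_diff_right inner_commute)
      thus "(b + w - b) \<bullet> (y - z) = 0" by simp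
    qed
  qed
qed

theorem corollary1:
  fixes \<alpha> :: real
  assumes "\<alpha> > 0"
  shows "\<exists>\<beta>>0. \<forall>(m::nat) (H :: nat \<Rightarrow> 'a::euclidean_space set) (v :: nat \<Rightarrow> 'a) b j LB S p.
     (\<forall>i\<in>{1..m}. is_plane (DIM('a) - 1) (H i) \<and> b \<in> H i
                  \<and> norm (v i) = 1 \<and> (\<forall>x\<in>H i. \<forall>y\<in>H i. v i \<bullet> (x - y) = 0))
     \<and> b \<in> LB \<and> flat_vecs j (\<beta> ^ j) (v ` {1..m}) LB
     \<and> (\<forall>j'<j. \<forall>L. b \<in> L \<longrightarrow> \<not> flat_vecs j' (\<beta> ^ j') (v ` {1..m}) L)
     \<and> p \<in> S
     \<and> (\<forall>i\<in>{1..m}. flat_set p (DIM('a) - 1) (\<beta> ^ DIM('a)) S (H i))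
     \<longrightarrow> flat_set p (DIM('a) - j) \<alpha> S (perp_plane LB b)"
proof -
  define a where "a = min \<alpha> 1"
  have a0: "0 < a" and a1: "a \<le> 1" and aa: "a \<le> \<alpha>" using assms by (auto simp: a_def)
  have api: "a < pi" using a1 pi_gt3 by linarith
  have sa0: "0 < sin a" using a0 api by (rule sin_gt_zero)
  have sa1: "sin a \<le> 1" by simp
  define \<beta> where "\<beta> = min (1/4) (sin a / 8)"
  have b0: "0 < \<beta>" using sa0 by (simp add: \<beta>_def)
  have b1: "\<beta> \<le> 1/4" by (simp add: \<beta>_def)
  have b8: "8 * \<beta> \<le> sin a" by (simp add: \<beta>_def)
  have bpow: "\<beta> ^ n \<le> 1" for n using b0 b1 by (intro power_le_one) auto
  have bpow0: "0 \<le> \<beta> ^ n" for n using b0 by simp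
  have bpi: "\<beta> ^ n < pi / 2" for n using bpow[of n] pi_gt3 by linarith
  show ?thesis
  proof (rule exI[of _ \<beta>], intro conjI allI impI, fact b0, elim conjE)
    fix m :: nat and H :: "nat \<Rightarrow> 'a set" and v :: "nat \<Rightarrow> 'a" and b j LB S p
    assume h1: "\<forall>i\<in>{1..m}. is_plane (DIM('a) - 1) (H i) \<and> b \<in> H i
                  \<and> norm (v i) = 1 \<and> (\<forall>x\<in>H i. \<forall>y\<in>H i. v i \<bullet> (x - y) = 0)"
      and hb: "b \<in> LB" and hf: "flat_vecs j (\<beta> ^ j) (v ` {1..m}) LB"
      and hmin: "\<forall>j'<j. \<forall>L. b \<in> L \<longrightarrow> \<not> flat_vecs j' (\<beta> ^ j') (v ` {1..m}) L"
      and hp: "p \<in> S"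
      and hS: "\<forall>i\<in>{1..m}. flat_set p (DIM('a) - 1) (\<beta> ^ DIM('a)) S (H i)"
    define U where "U = (\<lambda>x. -b + x) ` LB"
    have affLB: "affine LB" and adLB: "aff_dim LB = int j"
      and paLB: "\<And>i. i \<in> {1..m} \<Longrightarrow> plane_angle (v i) LB \<le> \<beta> ^ j"
      using hf unfolding flat_vecs_def is_plane_def by auto
    have sU: "subspace U" unfolding U_def using affLB hb by (rule affine_diffs_subspace)
    have "aff_dim LB = int (dim U)" unfolding U_def
      using hb by (intro aff_dim_eq_dim) (simp add: hull_inc)
    hence dimU: "dim U = j" using adLB by simp
    have jd: "j \<le> DIM('a)" using dimU dim_subset_UNIV[of U] by simp
    have DU: "w \<in> U" if "w \<in> {w. \<exists>x\<in>LB. \<exists>y\<in>LB. w = x - y \<and> w \<noteq> 0}" for w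
    proof -
      have "\<exists>x\<in>LB. \<exists>y\<in>LB. w = x - y" using that by blast
      then obtain x y where xy: "x \<in> LB" "y \<in> LB" "w = x - y" by blast
      have "(-b + x) - (-b + y) \<in> U" unfolding U_def using sU xy
        by (intro subspace_diff) (auto simp: U_def)
      thus ?thesis using xy by simp
    qed
    have "\<forall>i. \<exists>P r. P \<in> U \<and> (\<forall>x\<in>U. r \<bullet> x = 0) \<and> v i = P + r"
      using decomp[OF sU] by blast
    then obtain P r where Pr: "\<And>i. P i \<in> U \<and> (\<forall>x\<in>U. r i \<bullet> x = 0) \<and> v i = P i + r i"
      by metis
    have rsmall: "norm (r i) \<le> \<beta> ^ j" if iI: "i \<in> {1..m}" for i
    proof -
      have nv: "norm (v i) = 1" using h1 iI by blast
      show ?thesis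
        using Pr[of i] by (intro near_sub[OF nv _ _ _ paLB[OF iI] bpow0 bpi DU]) blast+
    qed
    define Uperp where "Uperp = {y. \<forall>x\<in>U. orthogonal x y}"
    have sUp: "subspace Uperp" unfolding Uperp_def by (rule subspace_orthogonal_to_vectors)
    have PP: "perp_plane LB b = (+) b ` Uperp" unfolding Uperp_def U_def by (rule perp_plane_eq[OF hb])
    have "dim {y \<in> UNIV. \<forall>x\<in>U. orthogonal x y} + dim U = dim (UNIV :: 'a set)"
      using sU by (intro dim_subspace_orthogonal_to_vectors) auto
    hence dimUp: "dim Uperp = DIM('a) - j" using dimU unfolding Uperp_def by simp
    have plane: "is_plane (DIM('a) - j) (perp_plane LB b)"
      unfolding is_plane_def PP
    proof (intro conjI)
      show "affine ((+) b ` Uperp)" using sUp by (simp add: subspace_imp_affine affine_translation[symmetric])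
      show "(+) b ` Uperp \<noteq> {}" using sUp subspace_0 by blast
      show "aff_dim ((+) b ` Uperp) = int (DIM('a) - j)"
        using sUp dimUp by (simp add: aff_dim_translation_eq aff_dim_subspace)
    qed
    have angle: "plane_angle x (perp_plane LB b) \<le> \<alpha>" if xS: "x \<in> {p - q |q. q \<in> S}" for x
    proof (cases "x = 0")
      case True thus ?thesis using assms by (simp add: plane_angle_def)
    next
      case False
      obtain q where q: "q \<in> S" "x = p - q" using xS by auto
      define u where "u = (1 / norm x) *\<^sub>R x"
      have nu: "norm u = 1" using False by (simp add: u_def)
      have pu: "plane_angle u L = plane_angle x L" for L
        unfolding u_def using False by (intro plane_angle_scale) auto
      have uv: "\<bar>u \<bullet> v i\<bar> \<le> \<beta> ^ j" if iI: "i \<in> {1..m}" for i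
      proof -
        have "plane_angle x (H i) \<le> \<beta> ^ DIM('a)"
          using hS iI q unfolding flat_set_def flat_vecs_def by blast
        hence "\<bar>u \<bullet> v i\<bar> \<le> \<beta> ^ DIM('a)"
          using h1 iI nu pu bpow0 bpi by (intro hyper_bound) auto
        also have "\<dots> \<le> \<beta> ^ j" using jd b0 b1 by (intro power_decreasing) auto
        finally show ?thesis .
      qed
      obtain y z where yz: "y \<in> U" "\<forall>x\<in>U. z \<bullet> x = 0" "u = y + z" using decomp[OF sU] by blast
      have ysmall: "norm y < 8 * \<beta>"
      proof (rule ccontr)
        assume "\<not> norm y < 8 * \<beta>"
        hence ty: "8 * \<beta> \<le> norm y" by simp
        hence "y \<noteq> 0" using b0 by auto
        hence "\<not> U \<subseteq> {0}" using yz(1) by auto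
        hence "dim U \<noteq> 0" by simp
        hence j1: "1 \<le> j" using dimU by simp
        have bj: "\<beta> ^ j = \<beta> * \<beta> ^ (j - 1)" using j1 by (metis Suc_diff_1 less_le_trans zero_less_one power_Suc)
        obtain W where W: "subspace W" "dim U = dim W + 1"
          "\<forall>i\<in>{1..m}. \<exists>w\<in>W. w \<noteq> 0 \<and> vec_angle (v i) w \<le> \<beta> ^ (j - 1)"
        proof (atomize_elim, rule key[OF sU nu yz(3) yz(1) yz(2), where I="{1..m}" and v=v and P=P and r=r])
          fix i assume iI: "i \<in> {1..m}"
          show "norm (v i) = 1 \<and> v i = P i + r i \<and> P i \<in> U \<and> (\<forall>x\<in>U. r i \<bullet> x = 0)
               \<and> norm (r i) \<le> \<beta> * \<beta> ^ (j - 1) \<and> \<bar>u \<bullet> v i\<bar> \<le> \<beta> * \<beta> ^ (j - 1)"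
          proof -
            have nv: "norm (v i) = 1" using h1 iI by blast
            show ?thesis unfolding bj[symmetric] using nv Pr[of i] rsmall[OF iI] uv[OF iI] by blast
          qed
        qed (use b0 b1 bpow ty in auto)
        define L where "L = (+) b ` W"
        have bL: "b \<in> L" unfolding L_def using W(1) subspace_0 by force
        have "flat_vecs (j - 1) (\<beta> ^ (j - 1)) (v ` {1..m}) L"
          unfolding flat_vecs_def is_plane_def
        proof (intro conjI ballI)
          show "affine L" unfolding L_def using W(1)
            by (simp add: subspace_imp_affine affine_translation[symmetric])
          show "L \<noteq> {}" using bL by auto
          show "aff_dim L = int (j - 1)" unfolding L_def using W dimU
            by (simp add: aff_dim_translation_eq aff_dim_subspace)
          fix v' assume "v' \<in> v ` {1..m}"
          then obtain i where iI: "i \<in> {1..m}" "v' = v i" by auto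
          obtain w where w: "w \<in> W" "w \<noteq> 0" "vec_angle (v i) w \<le> \<beta> ^ (j - 1)" using W(3) iI(1) by blast
          have "plane_angle (v i) L \<le> vec_angle (v i) ((b + w) - b)"
            using w bL unfolding L_def by (intro pa_upper) auto
          thus "plane_angle v' L \<le> \<beta> ^ (j - 1)" using w iI by simp
        qed
        moreover have "j - 1 < j" using j1 by simp
        ultimately show False using hmin bL by blast
      qed
      have yz0: "y \<bullet> z = 0" using yz inner_commute by metis
      have "u \<bullet> u = y \<bullet> y + 2 * (y \<bullet> z) + z \<bullet> z"
        unfolding yz(3) by (simp add: inner_add_left inner_add_right inner_commute)
      hence pyth: "(norm y)^2 + (norm z)^2 = 1" using nu yz0 by (simp add: dot_square_norm)
      have z1: "norm z \<le> 1" using pyth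
        by (metis abs_norm_cancel abs_square_le_1 le_add_same_cancel2 zero_le_power2)
      have ysa: "norm y < sin a" using ysmall b8 by linarith
      have "(norm y)^2 \<le> (sin a)^2" using ysa by (intro power_mono) auto
      hence "(cos a)^2 \<le> (norm z)^2" using pyth sin_cos_squared_add[of a] by linarith
      moreover have ca0: "0 \<le> cos a" using a0 a1 pi_gt3 by (intro cos_ge_zero) auto
      ultimately have cz: "cos a \<le> norm z" by (metis norm_ge_zero power2_le_imp_le)
      have z0: "z \<noteq> 0"
      proof
        assume "z = 0"
        hence "(norm y)^2 = 1" using pyth by simp
        moreover have "norm y < 1" using ysa sa1 by linarith
        hence "(norm y)^2 < 1" using abs_square_less_1[of "norm y"] by simp
        ultimately show False by simp
      qed
      have zUp: "z \<in> Uperp" using yz(2) unfolding Uperp_def orthogonal_def by (simp add: inner_commute)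
      have mem1: "b + z \<in> perp_plane LB b" using zUp unfolding PP by auto
      have mem2: "b \<in> perp_plane LB b" using sUp subspace_0 unfolding PP by force
      have "plane_angle u (perp_plane LB b) \<le> vec_angle u ((b + z) - b)"
        using z0 by (intro pa_upper[OF mem1 mem2]) auto
      also have "\<dots> = arccos (norm z)"
      proof -
        have "u \<bullet> z = (norm z)^2" unfolding yz(3) using yz0
          by (simp add: inner_add_left power2_norm_eq_inner)
        thus ?thesis unfolding vec_angle_def using nu z0 by (simp add: power2_eq_square)
      qed
      also have "\<dots> \<le> arccos (cos a)"
        by (rule arccos_le_arccos[OF _ cz z1]) simp
      also have "\<dots> = a" using a0 api by (intro arccos_cos) auto
      finally show ?thesis using pu aa by simp
    qed
    show "flat_set p (DIM('a) - j) \<alpha> S (perp_plane LB b)"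
      unfolding flat_set_def flat_vecs_def using hp plane angle by blast
  qed
qed

end
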